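(* There is an absolute constant $K$ such that for every $0<\epsilon<1$ and every $N\ge1$: at any time after a total of $N$ insertions into a soft sequence heap with error parameter $\epsilon$, the total number of items contained in the sequences $L_1,\dots,L_\ell$ is at most $K\sqrt{N/\epsilon}$.
   Context: Soft sequence heap with error parameter $0<\epsilon<1$ and $r_0=\lceil \lg(1/\epsilon)\rceil$ ($\lg$ = binary logarithm). The heap stores a list $L_1,\dots,L_\ell$ of nonempty sequences of items, each sorted increasingly by key and having a nonnegative integer rank, with strictly increasing (hence distinct) ranks. The operation $\mathrm{reduce}(L)$ on a sorted sequence $L=e_1,\dots,e_m$ removes $e_{2i}$ from $L$ for every $1\le i<m/2$, so the result has $\lceil (m+1)/2\rceil$ items (removed items are moved into auxiliary corruption/witness sets, not counted as sequence items). A sequence of rank $0$ is created by an insertion and contains one item. A sequence of rank $r+1$ is created only by merging (sorted union) two sequences of rank $r$; if $r+1>r_0$ and $r+1-r_0$ is even, $\mathrm{reduce}$ is then applied. Insertions and melds repeatedly merge equal-rank sequences until all ranks are distinct; otherwise items are only removed from sequences. *)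

theory Defs
  imports Complex_Main "HOL-Library.Sublist" "HOL-Library.Multiset"
begin

text \<open>A soft sequence heap is modelled as a list of (rank, sequence) pairs.
  Items are elements of a linearly ordered type (the key order).\<close>

type_synonym 'a sheap = "(nat \<times> 'a list) list"

definition r0 :: "real \<Rightarrow> nat" where
  "r0 eps = nat \<lceil>log 2 (1 / eps)\<rceil>"

text \<open>reduce e_1..e_m removes e_{2i} for 1 <= i < m/2; 0-indexed: drop index k
  when k is odd and k+1 < m.\<close>
definition reduce :: "'a list \<Rightarrow> 'a list" where
  "reduce L = map (nth L) (filter (\<lambda>k. even k \<or> k + 1 = length L) [0..<length L])"

definition merge_seq :: "real \<Rightarrow> nat \<Rightarrow> 'a::linorder list \<Rightarrow> 'a list \<Rightarrow> 'a list" where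
  "merge_seq eps r xs ys =
     (let L = sort (xs @ ys) in
      if r + 1 > r0 eps \<and> even (r + 1 - r0 eps) then reduce L else L)"

definition comb_step :: "real \<Rightarrow> 'a::linorder sheap \<Rightarrow> 'a sheap \<Rightarrow> bool" where
  "comb_step eps H H' \<longleftrightarrow>
     (\<exists>i j. i < length H \<and> j < length H \<and> i \<noteq> j \<and> fst (H ! i) = fst (H ! j) \<and>
        H' = (fst (H ! i) + 1, merge_seq eps (fst (H ! i)) (snd (H ! i)) (snd (H ! j)))
             # map (nth H) (filter (\<lambda>k. k \<noteq> i \<and> k \<noteq> j) [0..<length H]))"

definition consolidate :: "real \<Rightarrow> 'a::linorder sheap \<Rightarrow> 'a sheap \<Rightarrow> bool" where
  "consolidate eps H H'' \<longleftrightarrow>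
     (\<exists>H'. (comb_step eps)\<^sup>*\<^sup>* H H' \<and> distinct (map fst H') \<and>
        mset H'' = mset H' \<and> sorted_wrt (<) (map fst H''))"

text \<open>Removal of items from sequences (e.g. by extract-min); emptied sequences disappear,
  ranks are unchanged.\<close>
definition remove_items :: "'a sheap \<Rightarrow> 'a sheap \<Rightarrow> bool" where
  "remove_items H H' \<longleftrightarrow>
     (\<exists>Ls. length Ls = length H \<and> (\<forall>i < length H. subseq (Ls ! i) (snd (H ! i))) \<and>
        H' = filter (\<lambda>p. snd p \<noteq> []) (zip (map fst H) Ls))"

inductive reach :: "real \<Rightarrow> 'a::linorder sheap \<Rightarrow> nat \<Rightarrow> bool" for eps where
  empty: "reach eps [] 0"
| insert: "reach eps H N \<Longrightarrow> consolidate eps ((0, [x]) # H) H' \<Longrightarrow> reach eps H' (Suc N)"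
| meld: "reach eps H1 N1 \<Longrightarrow> reach eps H2 N2 \<Longrightarrow> consolidate eps (H1 @ H2) H'
         \<Longrightarrow> reach eps H' (N1 + N2)"
| remove: "reach eps H N \<Longrightarrow> remove_items H H' \<Longrightarrow> reach eps H' N"

definition total_items :: "'a sheap \<Rightarrow> nat" where
  "total_items H = (\<Sum>p\<leftarrow>H. length (snd p))"

end

theory Submission
  imports Defs
begin

fun Bf :: "nat \<Rightarrow> nat \<Rightarrow> nat" where
  "Bf c 0 = 1"
| "Bf c (Suc r) = (if Suc r > c \<and> even (Suc r - c) then Bf c r + 1 else 2 * Bf c r)"

lemma reduce_len_aux:
  "length (filter (\<lambda>k. even k \<or> k + 1 = c) [0..<m]) \<le> (m+1) div 2 + (if c \<le> m then 1 else 0)"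
proof (induction m)
  case 0
  then show ?case by simp
next
  case (Suc m)
  then show ?case by (cases "even m"; cases "c = Suc m"; auto split: if_splits)
qed

lemma reduce_len: "length (reduce L) \<le> (length L + 1) div 2 + 1"
  unfolding reduce_def using reduce_len_aux[of "length L" "length L"] by simp

lemma merge_len:
  assumes "length xs \<le> Bf (r0 eps) r" "length ys \<le> Bf (r0 eps) r"
  shows "length (merge_seq eps r xs ys) \<le> Bf (r0 eps) (Suc r)"
proof (cases "r + 1 > r0 eps \<and> even (r + 1 - r0 eps)")
  case True
  have "length (reduce (sort (xs @ ys))) \<le> (length xs + length ys + 1) div 2 + 1"
    using reduce_len[of "sort (xs @ ys)"] by simp
  also have "\<dots> \<le> Bf (r0 eps) r + 1" using assms by linarith
  moreover have "Bf (r0 eps) (Suc r) = Bf (r0 eps) r + 1"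
  proof -
    have c: "Suc r > r0 eps \<and> even (Suc r - r0 eps)" using True by (simp only: Suc_eq_plus1)
    show ?thesis by (simp only: Bf.simps if_P[OF c])
  qed
  moreover have "merge_seq eps r xs ys = reduce (sort (xs @ ys))"
    using True unfolding merge_seq_def Let_def by presburger
  ultimately show ?thesis by (metis le_trans)
next
  case False
  have "Bf (r0 eps) (Suc r) = 2 * Bf (r0 eps) r"
  proof -
    have c: "\<not> (Suc r > r0 eps \<and> even (Suc r - r0 eps))" using False by (metis Suc_eq_plus1)
    show ?thesis by (simp only: Bf.simps if_not_P[OF c])
  qed
  moreover have "merge_seq eps r xs ys = sort (xs @ ys)"
    using False unfolding merge_seq_def Let_def by presburger
  ultimately show ?thesis using assms by simp
qed

lemma Bf_closed:
  "(r \<le> c \<longrightarrow> Bf c r = 2 ^ r) \<and>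
   (c \<le> r \<and> even (r - c) \<longrightarrow> Bf c r + 1 \<le> 2 ^ ((r - c) div 2) * (2 ^ c + 1)) \<and>
   (c \<le> r \<and> odd (r - c) \<longrightarrow> Bf c r + 2 \<le> 2 * 2 ^ ((r - c) div 2) * (2 ^ c + 1))"
proof (induction r)
  case 0
  then show ?case by simp
next
  case (Suc r)
  show ?case
  proof (cases "Suc r \<le> c")
    case True
    have nc: "\<not> (Suc r > c \<and> even (Suc r - c))" using True by simp
    have b: "Bf c (Suc r) = 2 * Bf c r" by (simp only: Bf.simps if_not_P[OF nc])
    have "Bf c r = 2 ^ r" using Suc.IH True by simp
    then have B: "Bf c (Suc r) = 2 ^ Suc r" using b by simp
    show ?thesis
    proof (intro conjI impI)
      show "Bf c (Suc r) = 2 ^ Suc r" by (rule B)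
    next
      assume a: "c \<le> Suc r \<and> even (Suc r - c)"
      then have "c = Suc r" using True by simp
      then show "Bf c (Suc r) + 1 \<le> 2 ^ ((Suc r - c) div 2) * (2 ^ c + 1)" using B by simp
    next
      assume a: "c \<le> Suc r \<and> odd (Suc r - c)"
      then have "c = Suc r" using True by simp
      then show "Bf c (Suc r) + 2 \<le> 2 * 2 ^ ((Suc r - c) div 2) * (2 ^ c + 1)" using a by simp
    qed
  next
    case False
    then have cr: "c \<le> r" by simp
    show ?thesis
    proof (cases "even (r - c)")
      case True
      have e: "Suc r - c = Suc (r - c)" using cr by simp
      have b: "Bf c (Suc r) = 2 * Bf c r" using True False e by simp
      have d: "Suc (r - c) div 2 = (r - c) div 2" using True by presburger
      show ?thesis using Suc cr True False e b d by auto
    next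
      case od: False
      have e: "Suc r - c = Suc (r - c)" using cr by simp
      have b: "Bf c (Suc r) = Bf c r + 1" using od False e by simp
      have d: "Suc (r - c) div 2 = Suc ((r - c) div 2)" using od by presburger
      show ?thesis using Suc cr od False e b d by auto
    qed
  qed
qed

lemma Bf_sq: "(Bf c r) ^ 2 \<le> 9 * 2 ^ r * 2 ^ c"
proof -
  note cl = Bf_closed[of r c]
  consider "r \<le> c" | j where "r = c + 2 * j" | j where "r = c + 2 * j + 1"
  proof (cases "r \<le> c")
    case True
    then show ?thesis using that(1) by blast
  next
    case False
    then have rd: "r = c + (r - c)" by simp
    show ?thesis
    proof (cases "even (r - c)")
      case True
      then obtain j where "r - c = 2 * j" by (rule evenE)
      then show ?thesis using that(2) rd by simp
    next
      case False
      then obtain j where "r - c = 2 * j + 1" by (rule oddE)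
      then show ?thesis using that(3) rd by simp
    qed
  qed
  then show ?thesis
  proof cases
    case 1
    then have "Bf c r = 2 ^ r" using cl by simp
    moreover have "(2::nat) ^ r \<le> 2 ^ c" using 1 by (rule power_increasing) simp
    then have "(2::nat) ^ r * 2 ^ r \<le> 2 ^ r * 2 ^ c" by simp
    then have "(2::nat) ^ r * 2 ^ r \<le> 9 * 2 ^ r * 2 ^ c" by linarith
    ultimately show ?thesis by (simp only: power2_eq_square)
  next
    case 2
    then have "Bf c r \<le> 2 ^ j * (2 ^ c + 1)" using cl by auto
    also have "\<dots> \<le> 2 ^ j * (2 * 2 ^ c)" by simp
    finally have "Bf c r ^ 2 \<le> (2 ^ j * (2 * 2 ^ c)) ^ 2" by (rule power_mono) simp
    also have "\<dots> = 4 * 2 ^ r * 2 ^ c" using 2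
      by (simp add: power2_eq_square power_add power_mult algebra_simps)
    finally show ?thesis by simp
  next
    case 3
    then have "Bf c r \<le> 2 * 2 ^ j * (2 ^ c + 1)" using cl by auto
    also have "\<dots> \<le> 2 * 2 ^ j * (2 * 2 ^ c)" by simp
    finally have "Bf c r ^ 2 \<le> (2 * 2 ^ j * (2 * 2 ^ c)) ^ 2" by (rule power_mono) simp
    also have "\<dots> = 8 * 2 ^ r * 2 ^ c" using 3
      by (simp add: power2_eq_square power_add power_mult algebra_simps)
    finally show ?thesis by simp
  qed
qed

lemma Bf_real: "real (Bf c r) \<le> 3 * sqrt (2 ^ r) * sqrt (2 ^ c)"
proof -
  have "real (Bf c r ^ 2) \<le> real (9 * 2 ^ r * 2 ^ c)" using Bf_sq by (metis of_nat_le_iff)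
  then have "real (Bf c r) ^ 2 \<le> 9 * 2 ^ r * 2 ^ c" by simp
  then have "sqrt (real (Bf c r) ^ 2) \<le> sqrt (9 * 2 ^ r * 2 ^ c)" by (rule real_sqrt_le_mono)
  then show ?thesis by (simp add: real_sqrt_mult)
qed

lemma geom: "(\<Sum>r\<le>R. sqrt 2 ^ r) \<le> 4 * sqrt 2 ^ R"
proof (induction R)
  case 0
  then show ?case by simp
next
  case (Suc R)
  have s: "4 / 3 \<le> sqrt (2::real)" by (rule real_le_rsqrt) (simp add: power2_eq_square)
  have "(\<Sum>r\<le>Suc R. sqrt 2 ^ r) \<le> 4 * sqrt 2 ^ R + sqrt 2 ^ Suc R" using Suc by simp
  also have "\<dots> \<le> 4 * sqrt 2 ^ Suc R"
  proof -
    have p: "0 \<le> sqrt (2::real) ^ R" by simp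
    have "4 * sqrt 2 ^ R + sqrt 2 ^ Suc R = (4 + sqrt 2) * sqrt 2 ^ R" by (simp add: algebra_simps)
    also have "\<dots> \<le> (4 * sqrt 2) * sqrt 2 ^ R" using s p by (intro mult_right_mono) auto
    also have "\<dots> = 4 * sqrt 2 ^ Suc R" by simp
    finally show ?thesis .
  qed
  finally show ?case .
qed

lemma rank_sum:
  assumes "sorted_wrt (<) rs" "\<forall>r\<in>set rs. 2 ^ r \<le> N"
  shows "(\<Sum>r\<leftarrow>rs. sqrt (2 ^ r)) \<le> 4 * sqrt (real N)"
proof (cases "rs = []")
  case True
  then show ?thesis by simp
next
  case False
  define R where "R = Max (set rs)"
  have R: "R \<in> set rs" using False unfolding R_def by simp
  have dist: "distinct rs" using assms(1) strict_sorted_iff by blast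
  have "(\<Sum>r\<leftarrow>rs. sqrt (2 ^ r)) = (\<Sum>r\<in>set rs. sqrt 2 ^ r)"
    using dist by (simp add: sum_list_distinct_conv_sum_set real_sqrt_power)
  also have "\<dots> \<le> (\<Sum>r\<le>R. sqrt 2 ^ r)"
    by (rule sum_mono2) (auto simp: R_def)
  also have "\<dots> \<le> 4 * sqrt 2 ^ R" by (rule geom)
  also have "sqrt 2 ^ R = sqrt (2 ^ R)" by (simp add: real_sqrt_power)
  also have "\<dots> \<le> sqrt (real N)"
    using assms(2) R by (metis numeral_power_le_of_nat_cancel_iff real_sqrt_le_mono)
  finally show ?thesis by simp
qed

lemma r0_bound:
  assumes "0 < eps" "eps < 1"
  shows "(2::real) ^ r0 eps \<le> 2 / eps"
proof -
  have lp: "0 < log 2 (1 / eps)" using assms by simp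
  define c where "c = \<lceil>log 2 (1 / eps)\<rceil>"
  have c0: "0 \<le> c" using lp unfolding c_def by simp
  have "(2::real) ^ r0 eps = 2 powr (real (nat c))"
    unfolding r0_def c_def by (simp add: powr_realpow)
  also have "\<dots> = 2 powr (of_int c)" using c0 by simp
  also have "\<dots> \<le> 2 powr (log 2 (1 / eps) + 1)"
    unfolding c_def by (intro powr_mono) (linarith, simp)
  also have "\<dots> = 2 / eps" using assms by (simp add: powr_add)
  finally show ?thesis .
qed

definition Qi :: "nat \<Rightarrow> 'a sheap \<Rightarrow> bool" where
  "Qi c H = (\<forall>p\<in>set H. length (snd p) \<le> Bf c (fst p))"

definition W :: "'a sheap \<Rightarrow> nat" where
  "W H = sum_list (map (\<lambda>p. 2 ^ fst p) H)"

lemma comb_pres: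
  assumes "comb_step eps H H'" "Qi (r0 eps) H"
  shows "Qi (r0 eps) H' \<and> W H' = W H"
proof -
  obtain i j where ij: "i < length H" "j < length H" "i \<noteq> j" "fst (H ! i) = fst (H ! j)"
    and H': "H' = (fst (H ! i) + 1, merge_seq eps (fst (H ! i)) (snd (H ! i)) (snd (H ! j)))
             # map (nth H) (filter (\<lambda>k. k \<noteq> i \<and> k \<noteq> j) [0..<length H])"
    using assms(1) unfolding comb_step_def by blast
  have mi: "H ! i \<in> set H" "H ! j \<in> set H" using ij by auto
  have "length (merge_seq eps (fst (H ! i)) (snd (H ! i)) (snd (H ! j))) \<le> Bf (r0 eps) (Suc (fst (H ! i)))"
    apply (rule merge_len) using assms(2) mi ij(4) unfolding Qi_def by auto
  then have Q: "Qi (r0 eps) H'" using assms(2) unfolding H' Qi_def by auto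
  define g where "g k = (2::nat) ^ fst (H ! k)" for k
  have "W H = (\<Sum>k = 0..<length H. g k)"
    unfolding W_def g_def by (simp add: sum_list_sum_nth)
  also have "\<dots> = g i + g j + sum g ({0..<length H} - {i} - {j})"
    using ij by (simp add: sum.remove add.assoc)
  finally have 1: "W H = g i + g j + sum g ({0..<length H} - {i} - {j})" .
  have "W H' = 2 ^ (fst (H ! i) + 1) + sum_list (map g (filter (\<lambda>k. k \<noteq> i \<and> k \<noteq> j) [0..<length H]))"
    unfolding H' W_def g_def by (simp add: comp_def)
  also have "sum_list (map g (filter (\<lambda>k. k \<noteq> i \<and> k \<noteq> j) [0..<length H])) = sum g ({0..<length H} - {i} - {j})"
    by (subst sum_list_distinct_conv_sum_set) (auto intro: sum.cong)
  finally have "W H' = W H" using 1 ij(4) unfolding g_def by simp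
  with Q show ?thesis by simp
qed

lemma comb_star_pres:
  assumes "(comb_step eps)\<^sup>*\<^sup>* H H'" "Qi (r0 eps) H"
  shows "Qi (r0 eps) H' \<and> W H' = W H"
  using assms by (induction rule: rtranclp_induct) (auto dest: comb_pres)

lemma W_mset: "mset H = mset H' \<Longrightarrow> W H = W H'"
proof -
  have g: "sum_list (map f xs) = sum_mset (image_mset f (mset xs))" for f :: "nat \<times> 'a list \<Rightarrow> nat" and xs
    by (induction xs) auto
  assume "mset H = mset H'"
  then show ?thesis unfolding W_def g by simp
qed

lemma consolidate_pres:
  assumes "consolidate eps H H''" "Qi (r0 eps) H"
  shows "Qi (r0 eps) H'' \<and> W H'' = W H \<and> sorted_wrt (<) (map fst H'')"
proof -
  obtain H' where "(comb_step eps)\<^sup>*\<^sup>* H H'" "mset H'' = mset H'" "sorted_wrt (<) (map fst H'')"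
    using assms(1) unfolding consolidate_def by blast
  note h = this
  have A: "Qi (r0 eps) H' \<and> W H' = W H" using comb_star_pres[OF h(1) assms(2)] .
  have "set H'' = set H'" using mset_eq_setD[OF h(2)] .
  moreover have "W H'' = W H'" using W_mset[OF h(2)] .
  ultimately show ?thesis using A h(3) unfolding Qi_def by simp
qed

lemma remove_pres:
  assumes "remove_items H H'" "Qi c H" "sorted_wrt (<) (map fst H)"
  shows "Qi c H' \<and> W H' \<le> W H \<and> sorted_wrt (<) (map fst H')"
proof -
  obtain Ls where L: "length Ls = length H" "\<forall>i < length H. subseq (Ls ! i) (snd (H ! i))"
    and H': "H' = filter (\<lambda>p. snd p \<noteq> []) (zip (map fst H) Ls)"
    using assms(1) unfolding remove_items_def by blast
  have mz: "map fst (zip (map fst H) Ls) = map fst H" using L(1) by simp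
  have Q: "Qi c H'"
    unfolding Qi_def
  proof
    fix p assume "p \<in> set H'"
    then have "p \<in> set (zip (map fst H) Ls)" unfolding H' by simp
    then obtain i where i: "i < length H" "p = (fst (H ! i), Ls ! i)"
      using L(1) by (auto simp: set_zip)
    have "subseq (Ls ! i) (snd (H ! i))" using L(2) i(1) by blast
    then have "length (Ls ! i) \<le> length (snd (H ! i))" by (rule list_emb_length)
    moreover have "length (snd (H ! i)) \<le> Bf c (fst (H ! i))"
      using assms(2) i(1) unfolding Qi_def by auto
    ultimately show "length (snd p) \<le> Bf c (fst p)" using i by simp
  qed
  have "W H' \<le> sum_list (map (\<lambda>p. 2 ^ fst p) (zip (map fst H) Ls))"
    unfolding W_def H' by (rule sum_list_filter_le_nat)
  also have "\<dots> = W H"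
  proof -
    have "sum_list (map (\<lambda>p. (2::nat) ^ fst p) (zip (map fst H) Ls))
        = sum_list (map (\<lambda>r. 2 ^ r) (map fst (zip (map fst H) Ls)))" by (simp add: comp_def)
    also have "\<dots> = W H" unfolding mz W_def by (simp add: comp_def)
    finally show ?thesis .
  qed
  finally have Wle: "W H' \<le> W H" .
  have "sorted_wrt (\<lambda>x y. fst x < fst y) (zip (map fst H) Ls)"
  proof -
    have "sorted_wrt (<) (map fst (zip (map fst H) Ls))" using assms(3) mz by simp
    then show ?thesis by (simp add: sorted_wrt_map)
  qed
  then have "sorted_wrt (\<lambda>x y. fst x < fst y) H'" unfolding H' by (rule sorted_wrt_filter)
  then have "sorted_wrt (<) (map fst H')" by (simp add: sorted_wrt_map)
  with Q Wle show ?thesis by simp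
qed

lemma reach_inv:
  "reach eps H N \<Longrightarrow> Qi (r0 eps) H \<and> W H \<le> N \<and> sorted_wrt (<) (map fst H)"
proof (induction rule: reach.induct)
  case empty
  then show ?case by (simp add: Qi_def W_def)
next
  case (insert H N x H')
  have "Qi (r0 eps) ((0, [x]) # H)" using insert.IH by (simp add: Qi_def)
  from consolidate_pres[OF insert.hyps(2) this] insert.IH show ?case
    by (simp add: W_def)
next
  case (meld H1 N1 H2 N2 H')
  have "Qi (r0 eps) (H1 @ H2)" using meld.IH by (auto simp: Qi_def)
  from consolidate_pres[OF meld.hyps(3) this] meld.IH show ?case
    by (simp add: W_def)
next
  case (remove H N H')
  have "Qi (r0 eps) H' \<and> W H' \<le> W H \<and> sorted_wrt (<) (map fst H')"
    using remove_pres[OF remove.hyps(2)] remove.IH by blast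
  with remove.IH show ?case by linarith
qed

lemma W_mem: "p \<in> set H \<Longrightarrow> 2 ^ fst p \<le> W H"
  unfolding W_def by (induction H) auto

lemma real_sum_list: "real (sum_list (map f xs)) = sum_list (map (\<lambda>x. real (f x)) xs)"
  by (induction xs) auto

theorem lemma3:
  "\<exists>K::real. \<forall>(eps::real) (N::nat) (H::'a::linorder sheap).
     0 < eps \<longrightarrow> eps < 1 \<longrightarrow> 1 \<le> N \<longrightarrow> reach eps H N \<longrightarrow>
     real (total_items H) \<le> K * sqrt (real N / eps)"
proof (intro exI allI impI)
  fix eps :: real and N :: nat and H :: "'a::linorder sheap"
  assume e0: "0 < eps" and e1: "eps < 1" and N1: "1 \<le> N" and rh: "reach eps H N"
  define c where "c = r0 eps"
  have Q: "Qi c H" and Wle: "W H \<le> N" and S: "sorted_wrt (<) (map fst H)"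
    using reach_inv[OF rh] unfolding c_def by auto
  have mem: "\<forall>r\<in>set (map fst H). 2 ^ r \<le> N" using W_mem Wle by fastforce
  have "real (total_items H) = (\<Sum>p\<leftarrow>H. real (length (snd p)))"
    unfolding total_items_def by (rule real_sum_list)
  also have "\<dots> \<le> (\<Sum>p\<leftarrow>H. 3 * sqrt (2 ^ c) * sqrt (2 ^ fst p))"
  proof (rule sum_list_mono)
    fix p assume "p \<in> set H"
    then have "real (length (snd p)) \<le> real (Bf c (fst p))" using Q unfolding Qi_def by auto
    also have "\<dots> \<le> 3 * sqrt (2 ^ c) * sqrt (2 ^ fst p)" using Bf_real[of c "fst p"] by (simp add: mult.commute mult.left_commute)
    finally show "real (length (snd p)) \<le> 3 * sqrt (2 ^ c) * sqrt (2 ^ fst p)" .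
  qed
  also have "\<dots> = 3 * sqrt (2 ^ c) * (\<Sum>r\<leftarrow>map fst H. sqrt (2 ^ r))"
    by (simp add: sum_list_const_mult comp_def)
  also have "\<dots> \<le> 3 * sqrt (2 ^ c) * (4 * sqrt (real N))"
    by (intro mult_left_mono rank_sum S mem) simp
  also have "\<dots> \<le> 3 * sqrt (2 / eps) * (4 * sqrt (real N))"
    using r0_bound[OF e0 e1] unfolding c_def by (intro mult_right_mono mult_left_mono real_sqrt_le_mono) auto
  also have "\<dots> = (12 * sqrt 2) * sqrt (real N / eps)"
    by (simp add: real_sqrt_mult real_sqrt_divide)
  finally show "real (total_items H) \<le> (12 * sqrt 2) * sqrt (real N / eps)" .
qed

end
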